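(* Let $d$ be a positive integer and let $p,\beta\in(0,1]$. A.a.s. as $n\to\infty$, the diameter of the PageRank-based selection Webgraph model with $n$ vertices and parameters $d,p,\beta$ is at most $8e^p(\log n)/p$.
   Context: The PageRank of a finite directed multigraph (every vertex having positive out-degree) with parameter $p$ is the stationary distribution of the following random walk: it starts at a uniformly random vertex; at each step, with probability $p$ it jumps to a uniformly random vertex, and with probability $1-p$ it moves along a uniformly random out-edge (counted with multiplicity) of the current vertex. The PageRank-based selection Webgraph model is the random $n$-vertex directed multigraph, all vertices of out-degree $d$, generated as follows: start with a single vertex with $d$ self-loops; at each subsequent step a new vertex appears and creates $d$ edges to old vertices (repetitions allowed), the heads being chosen independently, each being a uniformly random existing vertex with probability $\beta$ and a vertex chosen according to the PageRank distribution (with parameter $p$) of the current graph with probability $1-\beta$. The diameter of a directed graph is the diameter of its underlying undirected graph. A.a.s. means with probability tending to $1$ as $n\to\infty$; $\log$ is natural. *)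

theory Defs
  imports "HOL-Probability.Probability" "HOL-Library.Extended_Nat"
begin

text \<open>A directed multigraph on vertex set {0..<length G}: G ! v is the list of heads of
  the out-edges of vertex v (counted with multiplicity).\<close>
type_synonym mgraph = "nat list list"

definition pr_step :: "real \<Rightarrow> mgraph \<Rightarrow> nat \<Rightarrow> nat pmf" where
  "pr_step p G v = bind_pmf (bernoulli_pmf p)
     (\<lambda>b. if b then pmf_of_set {..<length G} else pmf_of_multiset (mset (G ! v)))"

text \<open>PageRank: the stationary distribution of this walk (unique for p > 0).\<close>
definition pagerank :: "real \<Rightarrow> mgraph \<Rightarrow> nat pmf" where
  "pagerank p G = (THE \<mu>. set_pmf \<mu> \<subseteq> {..<length G} \<and> bind_pmf \<mu> (pr_step p G) = \<mu>)"

definition head_dist :: "real \<Rightarrow> real \<Rightarrow> mgraph \<Rightarrow> nat pmf" where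
  "head_dist p \<beta> G = bind_pmf (bernoulli_pmf \<beta>)
     (\<lambda>b. if b then pmf_of_set {..<length G} else pagerank p G)"

text \<open>webgraph d p beta k: the random graph after k steps, i.e. with k+1 vertices.\<close>
primrec webgraph :: "nat \<Rightarrow> real \<Rightarrow> real \<Rightarrow> nat \<Rightarrow> mgraph pmf" where
  "webgraph d p \<beta> 0 = return_pmf [replicate d 0]"
| "webgraph d p \<beta> (Suc k) = bind_pmf (webgraph d p \<beta> k)
     (\<lambda>G. map_pmf (\<lambda>hs. G @ [hs]) (replicate_pmf d (head_dist p \<beta> G)))"

text \<open>The n-vertex PageRank-based selection Webgraph model (n \<ge> 1).\<close>
definition webgraph_model :: "nat \<Rightarrow> real \<Rightarrow> real \<Rightarrow> nat \<Rightarrow> mgraph pmf" where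
  "webgraph_model d p \<beta> n = webgraph d p \<beta> (n - 1)"

text \<open>Underlying undirected graph, distances and diameter (\<infinity> if disconnected).\<close>
definition und_edges :: "mgraph \<Rightarrow> (nat \<times> nat) set" where
  "und_edges G = {(u, v). u < length G \<and> v < length G \<and> (v \<in> set (G ! u) \<or> u \<in> set (G ! v))}"

definition und_dist :: "mgraph \<Rightarrow> nat \<Rightarrow> nat \<Rightarrow> enat" where
  "und_dist G u v = (INF k \<in> {k. (u, v) \<in> und_edges G ^^ k}. enat k)"

definition diameter :: "mgraph \<Rightarrow> enat" where
  "diameter G = (SUP (u, v) \<in> {..<length G} \<times> {..<length G}. und_dist G u v)"

end

theory Submission
  imports Defs
begin


lemma integral_bind_pmf_fin:
  fixes f :: "'b \<Rightarrow> real"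
  assumes M: "finite (set_pmf M)" and N: "\<And>x. x \<in> set_pmf M \<Longrightarrow> finite (set_pmf (N x))"
    and f: "\<And>y. 0 \<le> f y"
  shows "measure_pmf.expectation (bind_pmf M N) f
       = measure_pmf.expectation M (\<lambda>x. measure_pmf.expectation (N x) f)"
proof -
  have finB: "finite (set_pmf (bind_pmf M N))" using M N by auto
  have "ennreal (measure_pmf.expectation (bind_pmf M N) f) = (\<integral>\<^sup>+y. ennreal (f y) \<partial>bind_pmf M N)"
    by (rule nn_integral_eq_integral[symmetric]) (auto intro: integrable_measure_pmf_finite[OF finB] simp: f)
  also have "\<dots> = (\<integral>\<^sup>+x. \<integral>\<^sup>+y. ennreal (f y) \<partial>N x \<partial>M)" by simp
  also have "\<dots> = (\<integral>\<^sup>+x. ennreal (measure_pmf.expectation (N x) f) \<partial>M)"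
  proof (rule nn_integral_cong_AE)
    show "AE x in measure_pmf M. (\<integral>\<^sup>+y. ennreal (f y) \<partial>N x) = ennreal (measure_pmf.expectation (N x) f)"
      unfolding AE_measure_pmf_iff
      by (auto intro!: nn_integral_eq_integral integrable_measure_pmf_finite N simp: f)
  qed
  also have "\<dots> = ennreal (measure_pmf.expectation M (\<lambda>x. measure_pmf.expectation (N x) f))"
    by (rule nn_integral_eq_integral) (auto intro: integrable_measure_pmf_finite[OF M] simp: f integral_nonneg_AE)
  finally show ?thesis
    by (subst (asm) ennreal_inj) (auto simp: f integral_nonneg_AE)
qed

definition wf :: "mgraph \<Rightarrow> bool" where
  "wf G \<longleftrightarrow> length G > 0 \<and> (\<forall>v<length G. G ! v \<noteq> [] \<and> set (G ! v) \<subseteq> {..<length G})"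

definition Qs :: "mgraph \<Rightarrow> nat \<Rightarrow> nat pmf" where
  "Qs G v = pmf_of_multiset (mset (G ! v))"

primrec walk :: "mgraph \<Rightarrow> nat \<Rightarrow> nat pmf" where
  "walk G 0 = pmf_of_set {..<length G}"
| "walk G (Suc j) = bind_pmf (walk G j) (Qs G)"

lemma set_Qs: "wf G \<Longrightarrow> v < length G \<Longrightarrow> set_pmf (Qs G v) \<subseteq> {..<length G}"
  unfolding wf_def Qs_def by (subst set_pmf_of_multiset) auto

lemma set_walk: "wf G \<Longrightarrow> set_pmf (walk G j) \<subseteq> {..<length G}"
proof (induction j)
  case 0
  then have "{..<length G} \<noteq> {}" by (auto simp: wf_def)
  then show ?case by (simp add: set_pmf_of_set)
next
  case (Suc j) then show ?case using set_Qs[OF Suc.prems] by fastforce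
qed

lemma pr_step_alt: "pr_step p G v = bind_pmf (bernoulli_pmf p) (\<lambda>b. if b then walk G 0 else Qs G v)"
  by (simp add: pr_step_def Qs_def cong: if_cong)

definition mu0 :: "real \<Rightarrow> mgraph \<Rightarrow> nat pmf" where
  "mu0 p G = bind_pmf (geometric_pmf p) (walk G)"

lemma mu0_stationary:
  assumes p: "0 < p" "p \<le> 1"
  shows "bind_pmf (mu0 p G) (pr_step p G) = mu0 p G"
proof -
  have "bind_pmf (mu0 p G) (pr_step p G)
      = bind_pmf (bernoulli_pmf p) (\<lambda>b. bind_pmf (mu0 p G) (\<lambda>v. if b then walk G 0 else Qs G v))"
    unfolding pr_step_alt by (rule bind_commute_pmf)
  also have "\<dots> = bind_pmf (bernoulli_pmf p) (\<lambda>b. if b then walk G 0 else bind_pmf (mu0 p G) (Qs G))"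
    by (intro bind_pmf_cong) auto
  also have "bind_pmf (mu0 p G) (Qs G) = bind_pmf (map_pmf Suc (geometric_pmf p)) (walk G)"
    by (simp add: mu0_def bind_assoc_pmf bind_map_pmf)
  also have "bind_pmf (bernoulli_pmf p) (\<lambda>b. if b then walk G 0 else bind_pmf (map_pmf Suc (geometric_pmf p)) (walk G))
     = bind_pmf (bind_pmf (bernoulli_pmf p) (\<lambda>b. if b then return_pmf 0 else map_pmf Suc (geometric_pmf p))) (walk G)"
    by (simp add: bind_assoc_pmf) (intro bind_pmf_cong, auto simp: bind_return_pmf)
  also have "\<dots> = mu0 p G"
    unfolding mu0_def by (subst (2) geometric_bind_pmf_unfold) (use p in auto)
  finally show ?thesis .
qed

lemma set_mu0: "0 < p \<Longrightarrow> p \<le> 1 \<Longrightarrow> wf G \<Longrightarrow> set_pmf (mu0 p G) \<subseteq> {..<length G}"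
  unfolding mu0_def using set_walk by auto




lemma pmf_pr_step:
  assumes "0 \<le> p" "p \<le> 1"
  shows "pmf (pr_step p G v) w = p * pmf (walk G 0) w + (1 - p) * pmf (Qs G v) w"
  unfolding pr_step_alt pmf_bind using assms by simp

lemma pmf_stat:
  assumes p: "0 \<le> p" "p \<le> 1" and wf: "wf G"
    and sup: "set_pmf \<mu> \<subseteq> {..<length G}"
  shows "pmf (bind_pmf \<mu> (pr_step p G)) w
       = p * pmf (walk G 0) w + (1 - p) * (\<Sum>v<length G. pmf \<mu> v * pmf (Qs G v) w)"
proof -
  have "pmf (bind_pmf \<mu> (pr_step p G)) w = (\<Sum>v<length G. pmf (pr_step p G v) w * pmf \<mu> v)"
    unfolding pmf_bind using sup by (intro integral_measure_pmf_real) auto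
  also have "\<dots> = (\<Sum>v<length G. pmf \<mu> v * (p * pmf (walk G 0) w)) + (\<Sum>v<length G. (1 - p) * (pmf \<mu> v * pmf (Qs G v) w))"
    by (subst sum.distrib[symmetric]) (intro sum.cong, auto simp: pmf_pr_step p algebra_simps)
  also have "\<dots> = p * pmf (walk G 0) w * (\<Sum>v<length G. pmf \<mu> v) + (1 - p) * (\<Sum>v<length G. pmf \<mu> v * pmf (Qs G v) w)"
    by (simp only: sum_distrib_left[symmetric] sum_distrib_right[symmetric] mult.commute)
  also have "(\<Sum>v<length G. pmf \<mu> v) = 1" using sup by (intro sum_pmf_eq_1) auto
  finally show ?thesis by simp
qed

lemma aux_lin: "(a::real) = pu + (1-p)*x \<Longrightarrow> b = pu + (1-p)*y \<Longrightarrow> z = x - y \<Longrightarrow> a - b = (1-p)*z"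
  by (simp add: right_diff_distrib)

lemma stat_unique:
  assumes p: "0 < p" "p \<le> 1" and wf: "wf G"
    and m1: "set_pmf \<mu> \<subseteq> {..<length G}" "bind_pmf \<mu> (pr_step p G) = \<mu>"
    and n1: "set_pmf \<nu> \<subseteq> {..<length G}" "bind_pmf \<nu> (pr_step p G) = \<nu>"
  shows "\<mu> = \<nu>"
proof -
  define S where "S = {..<length G}"
  define g where "g w = pmf \<mu> w - pmf \<nu> w" for w
  have geq: "g w = (1 - p) * (\<Sum>v\<in>S. g v * pmf (Qs G v) w)" for w
  proof -
    have "pmf \<mu> w = p * pmf (walk G 0) w + (1 - p) * (\<Sum>v<length G. pmf \<mu> v * pmf (Qs G v) w)"
      using pmf_stat[OF _ p(2) wf m1(1), of w] m1(2) p by simp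
    moreover have "pmf \<nu> w = p * pmf (walk G 0) w + (1 - p) * (\<Sum>v<length G. pmf \<nu> v * pmf (Qs G v) w)"
      using pmf_stat[OF _ p(2) wf n1(1), of w] n1(2) p by simp
    moreover have "(\<Sum>v\<in>S. g v * pmf (Qs G v) w) = (\<Sum>v<length G. pmf \<mu> v * pmf (Qs G v) w) - (\<Sum>v<length G. pmf \<nu> v * pmf (Qs G v) w)"
      by (simp add: g_def S_def left_diff_distrib sum_subtractf)
    ultimately show ?thesis
      unfolding g_def[of w] by (rule aux_lin)
  qed
  have Q1: "(\<Sum>w\<in>S. pmf (Qs G v) w) = 1" if "v \<in> S" for v
    using set_Qs[OF wf] that by (intro sum_pmf_eq_1) (auto simp: S_def)
  have "(\<Sum>w\<in>S. \<bar>g w\<bar>) = (\<Sum>w\<in>S. (1 - p) * \<bar>\<Sum>v\<in>S. g v * pmf (Qs G v) w\<bar>)"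
    using p by (intro sum.cong refl) (subst geq, simp add: abs_mult)
  also have "\<dots> \<le> (\<Sum>w\<in>S. (1 - p) * (\<Sum>v\<in>S. \<bar>g v\<bar> * pmf (Qs G v) w))"
  proof (intro sum_mono mult_left_mono)
    fix w show "\<bar>\<Sum>v\<in>S. g v * pmf (Qs G v) w\<bar> \<le> (\<Sum>v\<in>S. \<bar>g v\<bar> * pmf (Qs G v) w)"
      by (rule order.trans[OF sum_abs]) (simp add: abs_mult)
  qed (use p in auto)
  also have "\<dots> = (1 - p) * (\<Sum>v\<in>S. \<bar>g v\<bar> * (\<Sum>w\<in>S. pmf (Qs G v) w))"
    by (simp only: sum_distrib_left[symmetric] sum.swap[of _ S S])
  also have "\<dots> = (1 - p) * (\<Sum>v\<in>S. \<bar>g v\<bar>)"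
    using Q1 by simp
  finally have "p * (\<Sum>w\<in>S. \<bar>g w\<bar>) \<le> 0" by (simp add: algebra_simps)
  hence "(\<Sum>w\<in>S. \<bar>g w\<bar>) \<le> 0" using p by (simp add: mult_le_0_iff)
  hence "(\<Sum>w\<in>S. \<bar>g w\<bar>) = 0" by (meson antisym sum_nonneg abs_ge_zero)
  hence "\<forall>w\<in>S. \<bar>g w\<bar> = 0" by (subst (asm) sum_nonneg_eq_0_iff) (auto simp: S_def)
  hence "pmf \<mu> w = pmf \<nu> w" for w
  proof (cases "w \<in> S")
    case True then show ?thesis using \<open>\<forall>w\<in>S. \<bar>g w\<bar> = 0\<close> by (auto simp: g_def)
  next
    case False then show ?thesis using m1(1) n1(1) by (metis S_def pmf_eq_0_set_pmf subsetD)
  qed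
  thus ?thesis by (intro pmf_eqI)
qed

lemma pagerank_props:
  assumes p: "0 < p" "p \<le> 1" and wf: "wf G"
  shows "set_pmf (pagerank p G) \<subseteq> {..<length G} \<and> bind_pmf (pagerank p G) (pr_step p G) = pagerank p G"
proof -
  have "\<exists>!\<mu>. set_pmf \<mu> \<subseteq> {..<length G} \<and> bind_pmf \<mu> (pr_step p G) = \<mu>"
    using set_mu0[OF p wf] mu0_stationary[OF p] stat_unique[OF p wf] by blast
  thus ?thesis unfolding pagerank_def by (rule theI')
qed




definition conn :: "mgraph \<Rightarrow> bool" where
  "conn G \<longleftrightarrow> (\<forall>v<length G. \<exists>k. (v, 0) \<in> und_edges G ^^ k)"

definition dist0 :: "mgraph \<Rightarrow> nat \<Rightarrow> nat" where
  "dist0 G v = (LEAST k. (v, 0) \<in> und_edges G ^^ k)"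

lemma und_sym: "(u, v) \<in> und_edges G \<Longrightarrow> (v, u) \<in> und_edges G"
  unfolding und_edges_def by auto

lemma relpow_und_sym: "(x, y) \<in> und_edges G ^^ n \<Longrightarrow> (y, x) \<in> und_edges G ^^ n"
proof (induction n arbitrary: x)
  case 0 then show ?case by simp
next
  case (Suc n)
  from relpow_Suc_D2[OF Suc.prems] obtain z where z: "(x, z) \<in> und_edges G" "(z, y) \<in> und_edges G ^^ n"
    by blast
  have "(y, z) \<in> und_edges G ^^ n" by (rule Suc.IH[OF z(2)])
  moreover have "(z, x) \<in> und_edges G" by (rule und_sym[OF z(1)])
  ultimately show ?case by (rule relpow_Suc_I)
qed

lemma relpow_mono_mem: "(x, y) \<in> R ^^ n \<Longrightarrow> R \<subseteq> S \<Longrightarrow> (x, y) \<in> S ^^ n" for R S :: "('a \<times> 'a) set"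
proof (induction n arbitrary: x)
  case 0 then show ?case by simp
next
  case (Suc n)
  from relpow_Suc_D2[OF Suc.prems(1)] obtain z where z: "(x, z) \<in> R" "(z, y) \<in> R ^^ n"
    by blast
  have "(x, z) \<in> S" using z(1) Suc.prems(2) by (rule subsetD[rotated])
  moreover have "(z, y) \<in> S ^^ n" by (rule Suc.IH[OF z(2) Suc.prems(2)])
  ultimately show ?case by (rule relpow_Suc_I2)
qed

lemma dist0_path: "conn G \<Longrightarrow> v < length G \<Longrightarrow> (v, 0) \<in> und_edges G ^^ dist0 G v"
proof -
  assume "conn G" "v < length G"
  then obtain k where "(v, 0) \<in> und_edges G ^^ k" unfolding conn_def by blast
  thus ?thesis unfolding dist0_def by (rule LeastI)
qed

lemma dist0_le: "(v, 0) \<in> und_edges G ^^ k \<Longrightarrow> dist0 G v \<le> k"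
  unfolding dist0_def by (rule Least_le)

lemma edge_dist: "conn G \<Longrightarrow> u < length G \<Longrightarrow> (j, u) \<in> und_edges G \<Longrightarrow> dist0 G j \<le> Suc (dist0 G u)"
  by (intro dist0_le relpow_Suc_I2[of _ u] dist0_path)

lemma diam_bound:
  assumes c: "conn G" and L: "\<And>v. v < length G \<Longrightarrow> dist0 G v \<le> L"
  shows "diameter G \<le> enat (2 * L)"
  unfolding diameter_def
proof (rule SUP_least, clarify)
  fix u v assume uv: "u < length G" "v < length G"
  have "(u, 0) \<in> und_edges G ^^ dist0 G u" using dist0_path[OF c uv(1)] .
  moreover have "(0, v) \<in> und_edges G ^^ dist0 G v" using relpow_und_sym[OF dist0_path[OF c uv(2)]] .
  ultimately have "(u, v) \<in> und_edges G ^^ (dist0 G u + dist0 G v)" by (auto simp: relpow_add)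
  hence "und_dist G u v \<le> enat (dist0 G u + dist0 G v)"
    unfolding und_dist_def by (intro INF_lower) auto
  also have "\<dots> \<le> enat (2 * L)" using L[OF uv(1)] L[OF uv(2)] by simp
  finally show "und_dist G u v \<le> enat (2 * L)" .
qed

lemma und_edges_mono: "und_edges G \<subseteq> und_edges (G @ [hs])"
  unfolding und_edges_def by (auto simp: nth_append)

lemma dist0_mono: "conn G \<Longrightarrow> v < length G \<Longrightarrow> dist0 (G @ [hs]) v \<le> dist0 G v"
  by (intro dist0_le relpow_mono_mem[OF dist0_path und_edges_mono])

lemma new_dist:
  assumes c: "conn G" and h: "h \<in> set hs" "h < length G"
  shows "dist0 (G @ [hs]) (length G) \<le> Suc (dist0 G h)"
proof (intro dist0_le relpow_Suc_I2[of _ h])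
  show "(length G, h) \<in> und_edges (G @ [hs])" using h unfolding und_edges_def by auto
  show "(h, 0) \<in> und_edges (G @ [hs]) ^^ dist0 G h"
    by (rule relpow_mono_mem[OF dist0_path[OF c h(2)] und_edges_mono])
qed

lemma conn_app:
  assumes c: "conn G" and h: "h \<in> set hs" "h < length G"
  shows "conn (G @ [hs])"
  unfolding conn_def
proof (intro allI impI)
  fix v assume "v < length (G @ [hs])"
  hence "v < length G \<or> v = length G" by auto
  thus "\<exists>k. (v, 0) \<in> und_edges (G @ [hs]) ^^ k"
  proof
    assume "v < length G" thus ?thesis using relpow_mono_mem[OF dist0_path[OF c] und_edges_mono] by blast
  next
    assume v: "v = length G"
    have "(length G, h) \<in> und_edges (G @ [hs])" using h unfolding und_edges_def by auto
    moreover have "(h, 0) \<in> und_edges (G @ [hs]) ^^ dist0 G h"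
      by (rule relpow_mono_mem[OF dist0_path[OF c h(2)] und_edges_mono])
    ultimately have "(length G, 0) \<in> und_edges (G @ [hs]) ^^ Suc (dist0 G h)" by (rule relpow_Suc_I2)
    thus ?thesis using v by blast
  qed
qed




lemma wf_walk0: "wf G \<Longrightarrow> set_pmf (walk G 0) = {..<length G}"
proof -
  assume "wf G"
  then have "{..<length G} \<noteq> {}" by (auto simp: wf_def)
  then show ?thesis by (simp add: set_pmf_of_set)
qed

lemma exp_walk0: "wf G \<Longrightarrow> measure_pmf.expectation (walk G 0) f = (\<Sum>v<length G. f v) / length G"
  using integral_pmf_of_set[of "{..<length G}" f] by (auto simp: wf_def)

lemma fin_Qs: "G ! v \<noteq> [] \<Longrightarrow> finite (set_pmf (Qs G v))"
  by (simp add: Qs_def)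

lemma set_Qs': "G ! v \<noteq> [] \<Longrightarrow> set_pmf (Qs G v) = set (G ! v)"
  by (simp add: Qs_def)

lemma fin_step: "wf G \<Longrightarrow> v < length G \<Longrightarrow> finite (set_pmf (pr_step p G v))"
  unfolding pr_step_alt using fin_Qs[of G v] wf_walk0[of G] by (auto simp: wf_def)

lemma exp_step:
  assumes "wf G" "0 \<le> p" "p \<le> 1" "\<And>y. 0 \<le> f y" "G ! v \<noteq> []"
  shows "measure_pmf.expectation (pr_step p G v) f
    = p * ((\<Sum>v<length G. f v) / length G) + (1 - p) * measure_pmf.expectation (Qs G v) f"
proof -
  have "measure_pmf.expectation (pr_step p G v) f
     = measure_pmf.expectation (bernoulli_pmf p) (\<lambda>b. measure_pmf.expectation (if b then walk G 0 else Qs G v) f)"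
    unfolding pr_step_alt
    by (rule integral_bind_pmf_fin) (use assms fin_Qs wf_walk0 in auto)
  also have "\<dots> = p * measure_pmf.expectation (walk G 0) f + (1 - p) * measure_pmf.expectation (Qs G v) f"
    using assms by (simp add: mult.commute)
  finally show ?thesis using exp_walk0[OF assms(1)] by simp
qed

lemma exp_Qs_le:
  assumes "G ! v \<noteq> []" "\<And>j. j \<in> set (G ! v) \<Longrightarrow> f j \<le> c"
  shows "measure_pmf.expectation (Qs G v) (f :: nat \<Rightarrow> real) \<le> c"
proof -
  have "measure_pmf.expectation (Qs G v) f \<le> measure_pmf.expectation (Qs G v) (\<lambda>_. c)"
    by (intro integral_mono_AE integrable_measure_pmf_finite fin_Qs assms(1))
       (use assms in \<open>auto simp: AE_measure_pmf_iff set_Qs'\<close>)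
  thus ?thesis by simp
qed

lemma pr_bound:
  assumes p: "0 < p" "p \<le> 1" and wf: "wf G" and f: "\<And>y. 0 \<le> f y"
    and s: "0 \<le> s" "(1 - p) * s < 1"
    and edge: "\<And>u j. u < length G \<Longrightarrow> j \<in> set (G ! u) \<Longrightarrow> f j \<le> s * f u"
  shows "measure_pmf.expectation (pagerank p G) f
          \<le> p / (1 - (1 - p) * s) * ((\<Sum>v<length G. f v) / length G)"
proof -
  define \<mu> where "\<mu> = pagerank p G"
  define A where "A = (\<Sum>v<length G. f v) / length G"
  define B where "B = measure_pmf.expectation \<mu> f"
  have pr: "set_pmf \<mu> \<subseteq> {..<length G}" "bind_pmf \<mu> (pr_step p G) = \<mu>"
    using pagerank_props[OF p wf] by (auto simp: \<mu>_def)
  have finmu: "finite (set_pmf \<mu>)" using pr(1) finite_subset by blast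
  have "B = measure_pmf.expectation (bind_pmf \<mu> (pr_step p G)) f" using pr(2) by (simp add: B_def)
  also have "\<dots> = measure_pmf.expectation \<mu> (\<lambda>v. measure_pmf.expectation (pr_step p G v) f)"
    by (rule integral_bind_pmf_fin[OF finmu fin_step[OF wf] f]) (use pr(1) in auto)
  also have "\<dots> \<le> measure_pmf.expectation \<mu> (\<lambda>v. p * A + ((1 - p) * s) * f v)"
  proof (intro integral_mono_AE integrable_measure_pmf_finite finmu, unfold AE_measure_pmf_iff, intro ballI)
    fix v assume "v \<in> set_pmf \<mu>"
    hence v: "v < length G" using pr(1) by auto
    have ne: "G ! v \<noteq> []" using wf v by (auto simp: wf_def)
    have "measure_pmf.expectation (Qs G v) f \<le> s * f v"
      by (rule exp_Qs_le[OF ne edge[OF v]])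
    thus "measure_pmf.expectation (pr_step p G v) f \<le> p * A + ((1 - p) * s) * f v"
      unfolding exp_step[OF wf less_imp_le[OF p(1)] p(2) f ne] A_def
      using p by (simp add: mult_left_mono mult.assoc)
  qed
  also have "\<dots> = p * A + ((1 - p) * s) * B"
    unfolding B_def by (simp add: integrable_measure_pmf_finite[OF finmu])
  finally have "B * (1 - (1 - p) * s) \<le> p * A" by (simp add: algebra_simps)
  hence "B \<le> p * A / (1 - (1 - p) * s)" using s by (simp add: pos_le_divide_eq)
  thus ?thesis by (simp add: B_def A_def \<mu>_def ac_simps)
qed

lemma fin_head: "0 < p \<Longrightarrow> p \<le> 1 \<Longrightarrow> wf G \<Longrightarrow> set_pmf (head_dist p \<beta> G) \<subseteq> {..<length G}"
  unfolding head_dist_def using pagerank_props[of p G] wf_walk0[of G] by (auto simp: set_bind_pmf split: if_splits)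

lemma head_bound:
  assumes p: "0 < p" "p \<le> 1" and b: "0 \<le> \<beta>" "\<beta> \<le> 1" and wf: "wf G" and f: "\<And>y. 0 \<le> f y"
    and s: "1 \<le> s" "(1 - p) * s < 1"
    and edge: "\<And>u j. u < length G \<Longrightarrow> j \<in> set (G ! u) \<Longrightarrow> f j \<le> s * f u"
  shows "measure_pmf.expectation (head_dist p \<beta> G) f
          \<le> p / (1 - (1 - p) * s) * ((\<Sum>v<length G. f v) / length G)"
proof -
  define A where "A = (\<Sum>v<length G. f v) / length G"
  define r where "r = p / (1 - (1 - p) * s)"
  have A0: "0 \<le> A" unfolding A_def using f by (simp add: sum_nonneg)
  have den: "0 < 1 - (1 - p) * s" using s by simp
  have h: "0 \<le> (1 - p) * (s - 1)" using s p by simp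
  have "1 - (1 - p) * s \<le> p" using h by (simp add: algebra_simps)
  hence r1: "1 \<le> r" unfolding r_def using den by (simp add: le_divide_eq)
  have finpr: "finite (set_pmf (pagerank p G))"
    using pagerank_props[OF p wf] finite_subset by blast
  have "measure_pmf.expectation (head_dist p \<beta> G) f
      = measure_pmf.expectation (bernoulli_pmf \<beta>) (\<lambda>b. measure_pmf.expectation (if b then pmf_of_set {..<length G} else pagerank p G) f)"
    unfolding head_dist_def
    by (rule integral_bind_pmf_fin) (use f finpr wf_walk0[OF wf] in auto)
  also have "\<dots> = \<beta> * A + (1 - \<beta>) * measure_pmf.expectation (pagerank p G) f"
    using b exp_walk0[OF wf, of f] by (simp add: A_def mult.commute)
  also have "\<dots> \<le> \<beta> * (r * A) + (1 - \<beta>) * (r * A)"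
  proof (intro add_mono mult_left_mono)
    show "A \<le> r * A" using r1 A0 by (simp add: mult_le_cancel_right1)
    show "measure_pmf.expectation (pagerank p G) f \<le> r * A"
      unfolding r_def A_def by (rule pr_bound[OF p wf f _ s(2) edge]) (use s in auto)
  qed (use b in auto)
  also have "\<dots> = r * A" by (simp add: algebra_simps)
  finally show ?thesis by (simp add: r_def A_def)
qed




lemma map_hd_replicate: "0 < d \<Longrightarrow> map_pmf hd (replicate_pmf d X) = X"
proof (cases d)
  case (Suc d')
  have "map_pmf hd (replicate_pmf (Suc d') X) = bind_pmf X return_pmf"
    by (simp add: map_bind_pmf map_return_pmf)
  then show ?thesis using Suc by (simp add: bind_return_pmf')
qed simp

lemma fin_replicate: "finite (set_pmf X) \<Longrightarrow> finite (set_pmf (replicate_pmf d X))"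
  unfolding set_replicate_pmf
  using finite_lists_length_eq[of "set_pmf X" d]
  by (rule rev_finite_subset) (auto simp: in_lists_conv_set)

definition winv :: "nat \<Rightarrow> mgraph \<Rightarrow> bool" where
  "winv k G \<longleftrightarrow> length G = Suc k \<and> wf G \<and> conn G"

lemma set_rep_head:
  assumes "hs \<in> set_pmf (replicate_pmf d (head_dist p \<beta> G))" "0 < p" "p \<le> 1" "wf G"
  shows "length hs = d" "set hs \<subseteq> {..<length G}"
  using assms fin_head[OF assms(2,3,4), of \<beta>] by (auto simp: set_replicate_pmf in_lists_conv_set)

lemma winv_step:
  assumes d: "0 < d" and p: "0 < p" "p \<le> 1" and G: "winv k G"
    and hs: "hs \<in> set_pmf (replicate_pmf d (head_dist p \<beta> G))"
  shows "winv (Suc k) (G @ [hs])"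
proof -
  have wf: "wf G" and c: "conn G" and len: "length G = Suc k" using G by (auto simp: winv_def)
  note h = set_rep_head[OF hs p wf]
  have ne: "hs \<noteq> []" using h(1) d by auto
  have wf': "wf (G @ [hs])" using wf h ne
    unfolding wf_def by (auto simp: nth_append) (metis less_SucI subset_iff lessThan_iff)+
  have hl: "hd hs < length G" using h(2) hd_in_set[OF ne] by auto
  have "conn (G @ [hs])" using conn_app[OF c, of "hd hs" hs] ne hl by auto
  thus ?thesis using wf' len by (simp add: winv_def)
qed

lemma web_props:
  assumes d: "0 < d" and p: "0 < p" "p \<le> 1"
  shows "(\<forall>G\<in>set_pmf (webgraph d p \<beta> k). winv k G) \<and> finite (set_pmf (webgraph d p \<beta> k))"
proof (induction k)
  case 0
  have "winv 0 [replicate d 0]"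
    using d unfolding winv_def wf_def conn_def by (auto intro: exI[of _ 0])
  then show ?case by simp
next
  case (Suc k)
  have A: "\<forall>G\<in>set_pmf (webgraph d p \<beta> (Suc k)). winv (Suc k) G"
    using Suc winv_step[OF d p] by auto
  have "finite (set_pmf (replicate_pmf d (head_dist p \<beta> G)))" if "G \<in> set_pmf (webgraph d p \<beta> k)" for G
    using that Suc fin_head[OF p, of G \<beta>] by (intro fin_replicate) (auto simp: winv_def intro: finite_subset)
  then have "finite (set_pmf (webgraph d p \<beta> (Suc k)))" using Suc by auto
  with A show ?case by blast
qed

definition Spot :: "real \<Rightarrow> mgraph \<Rightarrow> real" where
  "Spot s G = (\<Sum>v<length G. s ^ dist0 G v)"

lemma Spot_step:
  assumes s: "1 \<le> s" and G: "conn G" and hs: "h \<in> set hs" "h < length G"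
  shows "Spot s (G @ [hs]) \<le> Spot s G + s * s ^ dist0 G h"
proof -
  have "Spot s (G @ [hs]) = (\<Sum>v<length G. s ^ dist0 (G @ [hs]) v) + s ^ dist0 (G @ [hs]) (length G)"
    by (simp add: Spot_def)
  also have "\<dots> \<le> Spot s G + s ^ Suc (dist0 G h)"
    unfolding Spot_def
    by (intro add_mono sum_mono power_increasing dist0_mono new_dist G hs s) auto
  finally show ?thesis by simp
qed

lemma exp_step_bound:
  assumes d: "0 < d" and p: "0 < p" "p \<le> 1" and b: "0 \<le> \<beta>" "\<beta> \<le> 1"
    and s: "1 \<le> s" "(1 - p) * s < 1" and G: "winv k G"
  shows "measure_pmf.expectation (map_pmf (\<lambda>hs. G @ [hs]) (replicate_pmf d (head_dist p \<beta> G))) (Spot s)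
     \<le> (1 + s * (p / (1 - (1 - p) * s)) / (Suc k)) * Spot s G"
proof -
  have wf: "wf G" and c: "conn G" and len: "length G = Suc k" using G by (auto simp: winv_def)
  define R where "R = replicate_pmf d (head_dist p \<beta> G)"
  have finR: "finite (set_pmf R)" unfolding R_def
    using fin_head[OF p wf] by (intro fin_replicate) (auto intro: finite_subset)
  have "measure_pmf.expectation R (\<lambda>hs. Spot s (G @ [hs]))
      \<le> measure_pmf.expectation R (\<lambda>hs. Spot s G + s * s ^ dist0 G (hd hs))"
  proof (intro integral_mono_AE integrable_measure_pmf_finite finR, unfold AE_measure_pmf_iff, intro ballI)
    fix hs assume "hs \<in> set_pmf R"
    note h = set_rep_head[OF this[unfolded R_def] p wf]
    have ne: "hs \<noteq> []" using h(1) d by auto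
    show "Spot s (G @ [hs]) \<le> Spot s G + s * s ^ dist0 G (hd hs)"
    proof (rule Spot_step[OF s(1) c])
      show "hd hs \<in> set hs" using ne by simp
      thus "hd hs < length G" using h(2) by auto
    qed
  qed
  also have "\<dots> = Spot s G + s * measure_pmf.expectation (map_pmf hd R) (\<lambda>h. s ^ dist0 G h)"
    by (simp add: integrable_measure_pmf_finite[OF finR])
  also have "map_pmf hd R = head_dist p \<beta> G" unfolding R_def by (rule map_hd_replicate[OF d])
  also have "measure_pmf.expectation (head_dist p \<beta> G) (\<lambda>h. s ^ dist0 G h)
        \<le> p / (1 - (1 - p) * s) * ((\<Sum>v<length G. s ^ dist0 G v) / length G)"
  proof (rule head_bound[OF p b wf _ s])
    show "0 \<le> s ^ dist0 G y" for y using s by simp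
    fix u j assume uj: "u < length G" "j \<in> set (G ! u)"
    have "j < length G" using wf uj by (auto simp: wf_def)
    hence "(j, u) \<in> und_edges G" using uj unfolding und_edges_def by auto
    hence "dist0 G j \<le> Suc (dist0 G u)" by (rule edge_dist[OF c uj(1)])
    hence "s ^ dist0 G j \<le> s ^ Suc (dist0 G u)" using s by (intro power_increasing) auto
    thus "s ^ dist0 G j \<le> s * s ^ dist0 G u" by simp
  qed
  finally have "measure_pmf.expectation R (\<lambda>hs. Spot s (G @ [hs]))
     \<le> Spot s G + s * (p / (1 - (1 - p) * s) * (Spot s G / Suc k))"
    using s by (simp add: Spot_def len mult_left_mono)
  thus ?thesis unfolding R_def by (simp add: algebra_simps)
qed




lemma Spot_nonneg: "0 \<le> s \<Longrightarrow> 0 \<le> Spot s G"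
  unfolding Spot_def by (intro sum_nonneg) auto

lemma e_step:
  assumes d: "0 < d" and p: "0 < p" "p \<le> 1" and b: "0 \<le> \<beta>" "\<beta> \<le> 1"
    and s: "1 \<le> s" "(1 - p) * s < 1"
  shows "measure_pmf.expectation (webgraph d p \<beta> (Suc k)) (Spot s)
      \<le> (1 + s * (p / (1 - (1 - p) * s)) / (Suc k)) * measure_pmf.expectation (webgraph d p \<beta> k) (Spot s)"
proof -
  note W = web_props[OF d p, of \<beta> k]
  have fin2: "finite (set_pmf (map_pmf (\<lambda>hs. G @ [hs]) (replicate_pmf d (head_dist p \<beta> G))))"
    if "G \<in> set_pmf (webgraph d p \<beta> k)" for G
  proof -
    have "wf G" using W that by (auto simp: winv_def)
    thus ?thesis using fin_head[OF p, of G \<beta>] by (auto intro!: fin_replicate intro: finite_subset)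
  qed
  have "measure_pmf.expectation (webgraph d p \<beta> (Suc k)) (Spot s)
     = measure_pmf.expectation (webgraph d p \<beta> k)
         (\<lambda>G. measure_pmf.expectation (map_pmf (\<lambda>hs. G @ [hs]) (replicate_pmf d (head_dist p \<beta> G))) (Spot s))"
    unfolding webgraph.simps(2)
    by (rule integral_bind_pmf_fin) (use W fin2 Spot_nonneg s in auto)
  also have "\<dots> \<le> measure_pmf.expectation (webgraph d p \<beta> k)
         (\<lambda>G. (1 + s * (p / (1 - (1 - p) * s)) / (Suc k)) * Spot s G)"
    by (intro integral_mono_AE integrable_measure_pmf_finite)
       (use W exp_step_bound[OF d p b s] in \<open>auto simp: AE_measure_pmf_iff\<close>)
  also have "\<dots> = (1 + s * (p / (1 - (1 - p) * s)) / (Suc k)) * measure_pmf.expectation (webgraph d p \<beta> k) (Spot s)"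
    by simp
  finally show ?thesis .
qed

lemma Spot_zero: "Spot s [replicate d 0] = 1"
proof -
  have "dist0 [replicate d 0] 0 = 0" by (intro le_0_eq[THEN iffD1] dist0_le) simp
  thus ?thesis by (simp add: Spot_def)
qed

lemma e_zero: "measure_pmf.expectation (webgraph d p \<beta> 0) (Spot s) = 1"
  by (simp add: Spot_zero)

lemma ln_step: "1 \<le> k \<Longrightarrow> 1 / (real k + 1) \<le> ln (real k + 1) - ln (real k)"
proof -
  assume k: "1 \<le> k"
  have "ln (real k / (real k + 1)) \<le> real k / (real k + 1) - 1"
    by (rule ln_le_minus_one) (use k in auto)
  moreover have "ln (real k / (real k + 1)) = ln (real k) - ln (real k + 1)"
    using k by (simp add: ln_div)
  moreover have "real k / (real k + 1) - 1 = - 1 / (real k + 1)"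
    by (simp add: field_simps)
  ultimately show ?thesis by simp
qed

lemma powr_step:
  assumes k: "1 \<le> k" and c: "0 \<le> c"
  shows "(1 + c / (real k + 1)) * real k powr c \<le> (real k + 1) powr c"
proof -
  have "1 + c / (real k + 1) \<le> exp (c / (real k + 1))" by (rule exp_ge_add_one_self)
  also have "\<dots> \<le> exp (c * (ln (real k + 1) - ln (real k)))"
    using ln_step[OF k] c by (simp add: mult_left_mono divide_inverse)
  also have "\<dots> = (real k + 1) powr c / real k powr c"
    using k by (simp add: powr_def exp_diff algebra_simps)
  finally have "(1 + c / (real k + 1)) \<le> (real k + 1) powr c / real k powr c" .
  moreover have "0 < real k powr c" using k by simp
  ultimately show ?thesis by (simp add: pos_le_divide_eq)
qed

lemma e_bound:
  assumes d: "0 < d" and p: "0 < p" "p \<le> 1" and b: "0 \<le> \<beta>" "\<beta> \<le> 1"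
    and s: "1 \<le> s" "(1 - p) * s < 1" and k: "1 \<le> k"
  shows "measure_pmf.expectation (webgraph d p \<beta> k) (Spot s)
       \<le> (1 + s * (p / (1 - (1 - p) * s))) * real k powr (s * (p / (1 - (1 - p) * s)))"
  using k
proof (induction k rule: dec_induct)
  case base
  show ?case using e_step[OF d p b s, of 0] by (simp add: Spot_zero)
next
  case (step k)
  define c where "c = s * (p / (1 - (1 - p) * s))"
  have c0: "0 \<le> c" unfolding c_def using s p by simp
  have "measure_pmf.expectation (webgraph d p \<beta> (Suc k)) (Spot s)
      \<le> (1 + c / (real k + 1)) * measure_pmf.expectation (webgraph d p \<beta> k) (Spot s)"
    using e_step[OF d p b s, of k] by (simp add: c_def add.commute)
  also have "\<dots> \<le> (1 + c / (real k + 1)) * ((1 + c) * real k powr c)"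
  proof (rule mult_left_mono)
    show "measure_pmf.expectation (webgraph d p \<beta> k) (Spot s) \<le> (1 + c) * real k powr c"
      using step.IH by (simp add: c_def)
    show "0 \<le> 1 + c / (real k + 1)" using c0 by simp
  qed
  also have "\<dots> = (1 + c) * ((1 + c / (real k + 1)) * real k powr c)" by simp
  also have "\<dots> \<le> (1 + c) * (real k + 1) powr c"
    using powr_step[OF step.hyps(1) c0] c0 by (intro mult_left_mono) auto
  finally show ?case by (simp add: c_def add.commute)
qed

lemma gamma_pos:
  fixes p :: real
  assumes p: "0 < p" "p \<le> 1"
  shows "(1 + p / 2) * (p / (1 - (1 - p) * (1 + p / 2))) < 4 * exp p / p * ln (1 + p / 2)"
proof -
  have den: "1 - (1 - p) * (1 + p / 2) = p * (1 + p) / 2" by (simp add: field_simps)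
  have c: "(1 + p / 2) * (p / (1 - (1 - p) * (1 + p / 2))) = (2 + p) / (1 + p)"
  proof -
    have q: "0 < 1 + p" using p by simp
    have "p / (p * (1 + p) / 2) = 2 / (1 + p)" using p q by (simp add: divide_simps)
    thus ?thesis unfolding den using p q by (simp add: divide_simps) (simp add: algebra_simps)
  qed
  have "ln (1 / (1 + p / 2)) \<le> 1 / (1 + p / 2) - 1" by (rule ln_le_minus_one) (use p in simp)
  hence ls: "p / (2 + p) \<le> ln (1 + p / 2)" using p by (simp add: ln_div field_simps)
  have e: "1 + p \<le> exp p" by simp
  have pp: "0 < p * 4 + p * (p * 3)" using p by (simp add: add_pos_nonneg)
  have "(2 + p) * (2 + p) < 4 * (1 + p) * (1 + p)" using pp by (simp add: algebra_simps)
  also have "\<dots> \<le> 4 * exp p * (1 + p)" using e p by (intro mult_right_mono mult_left_mono) auto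
  finally have key: "(2 + p) * (2 + p) < 4 * exp p * (1 + p)" .
  have "(2 + p) / (1 + p) < 4 * exp p / (2 + p)"
    using key p by (simp add: field_simps)
  also have "\<dots> = 4 * exp p / p * (p / (2 + p))"
  proof -
    have "0 < 2 + p" using p by simp
    thus ?thesis using p by (simp add: divide_simps)
  qed
  also have "\<dots> \<le> 4 * exp p / p * ln (1 + p / 2)"
    using ls p by (intro mult_left_mono) auto
  finally show ?thesis using c by simp
qed




lemma floor_twice: "0 \<le> (x::real) \<Longrightarrow> 2 * nat \<lfloor>x\<rfloor> \<le> nat \<lfloor>2 * x\<rfloor>"
proof -
  assume x: "0 \<le> x"
  have "of_int (2 * \<lfloor>x\<rfloor>) \<le> 2 * x" by simp
  hence "2 * \<lfloor>x\<rfloor> \<le> \<lfloor>2 * x\<rfloor>" by (simp only: le_floor_iff)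
  thus ?thesis using x by (simp add: nat_mult_distrib[symmetric] nat_mono)
qed

lemma floor_succ: "0 \<le> (x::real) \<Longrightarrow> x \<le> real (nat \<lfloor>x\<rfloor> + 1)"
  by (simp add: of_nat_nat) linarith

theorem theorem5:
  fixes d :: nat and p \<beta> :: real
  assumes "d > 0" and "0 < p" and "p \<le> 1" and "0 < \<beta>" and "\<beta> \<le> 1"
  shows "(\<lambda>n. measure_pmf.prob (webgraph_model d p \<beta> n)
            {G. diameter G \<le> enat (nat \<lfloor>8 * exp p * ln (real n) / p\<rfloor>)})
         \<longlonglongrightarrow> 1"
proof -
  note d = assms(1) and p = assms(2,3) and b = less_imp_le[OF assms(4)] assms(5)
  define s where "s = 1 + p / 2"
  define c where "c = s * (p / (1 - (1 - p) * s))"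
  define K where "K = 4 * exp p / p"
  define \<gamma> where "\<gamma> = K * ln s - c"
  have s1: "1 < s" using p by (simp add: s_def)
  have "(1 - p) * s = 1 - p / 2 - p * p / 2" by (simp add: s_def field_simps)
  moreover have "0 \<le> p * p" by simp
  ultimately have sq: "(1 - p) * s < 1" using p by linarith
  have \<gamma>: "0 < \<gamma>" using gamma_pos[OF p] by (simp add: \<gamma>_def K_def c_def s_def)
  have c0: "0 \<le> c" using s1 sq p by (simp add: c_def)
  have K0: "0 < K" using p by (simp add: K_def)
  define T where "T n = {G. diameter G \<le> enat (nat \<lfloor>8 * exp p * ln (real n) / p\<rfloor>)}" for n
  have main: "1 - (1 + c) * real n powr (- \<gamma>) \<le> measure_pmf.prob (webgraph_model d p \<beta> n) (T n)"
    if n2: "2 \<le> n" for n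
  proof -
    define k where "k = n - 1"
    have k1: "1 \<le> k" and nk: "n = Suc k" using n2 by (auto simp: k_def)
    define M where "M = webgraph d p \<beta> k"
    have MM: "webgraph_model d p \<beta> n = M" by (simp add: webgraph_model_def M_def k_def)
    note W = web_props[OF d p, of \<beta> k]
    have finM: "finite (set_pmf M)" using W by (simp add: M_def)
    define x where "x = K * ln (real n)"
    have x0: "0 \<le> x" using K0 n2 by (simp add: x_def)
    define L where "L = nat \<lfloor>x\<rfloor>"
    define t where "t = s ^ (L + 1)"
    have t0: "0 < t" using s1 by (simp add: t_def)
    define E where "E = measure_pmf.expectation M (Spot s)"
    have markov: "measure_pmf.prob M {G. t \<le> Spot s G} \<le> E / t"
      using integral_Markov_inequality_measure[of M "Spot s" UNIV t] t0 Spot_nonneg[of s] s1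
      by (simp add: E_def integrable_measure_pmf_finite[OF finM])
    have sub: "{G. Spot s G < t} \<inter> set_pmf M \<subseteq> T n"
    proof clarify
      fix G assume G: "Spot s G < t" "G \<in> set_pmf M"
      have winv: "winv k G" using W G(2) by (simp add: M_def)
      have dL: "dist0 G v \<le> L" if v: "v < length G" for v
      proof -
        have "s ^ dist0 G v \<le> Spot s G" unfolding Spot_def
          by (rule member_le_sum) (use v s1 in auto)
        also have "\<dots> < s ^ (L + 1)" using G(1) by (simp add: t_def)
        finally have "dist0 G v < L + 1" by (rule power_less_imp_less_exp[OF s1])
        thus ?thesis by simp
      qed
      have "diameter G \<le> enat (2 * L)"
        by (rule diam_bound) (use winv dL in \<open>auto simp: winv_def\<close>)
      also have "2 * L \<le> nat \<lfloor>8 * exp p * ln (real n) / p\<rfloor>"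
      proof -
        have "8 * exp p * ln (real n) / p = 2 * x" by (simp add: x_def K_def)
        thus ?thesis using floor_twice[OF x0] by (simp add: L_def)
      qed
      hence "enat (2 * L) \<le> enat (nat \<lfloor>8 * exp p * ln (real n) / p\<rfloor>)" by simp
      finally show "G \<in> T n" by (simp add: T_def)
    qed
    have "measure_pmf.prob M ({G. Spot s G < t} \<inter> set_pmf M) \<le> measure_pmf.prob M (T n)"
      by (rule measure_pmf.finite_measure_mono[OF sub]) simp
    hence "measure_pmf.prob M {G. Spot s G < t} \<le> measure_pmf.prob M (T n)"
      by (simp add: measure_Int_set_pmf)
    moreover have "measure_pmf.prob M {G. Spot s G < t} = 1 - measure_pmf.prob M {G. t \<le> Spot s G}"
    proof -
      have "{G. Spot s G < t} = space (measure_pmf M) - {G. t \<le> Spot s G}" by auto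
      thus ?thesis using measure_pmf.prob_compl[of "{G. t \<le> Spot s G}" M] by simp
    qed
    ultimately have P1: "1 - E / t \<le> measure_pmf.prob M (T n)" using markov by linarith
    have E1: "E \<le> (1 + c) * real n powr c"
    proof -
      have "E \<le> (1 + c) * real k powr c"
        using e_bound[OF d p b less_imp_le[OF s1] sq k1] by (simp add: E_def M_def c_def)
      also have "\<dots> \<le> (1 + c) * real n powr c"
        using c0 nk by (intro mult_left_mono powr_mono2) auto
      finally show ?thesis .
    qed
    have t1: "real n powr (K * ln s) \<le> t"
    proof -
      have "real n powr (K * ln s) = exp ((K * ln (real n)) * ln s)"
        using n2 by (simp add: powr_def mult_ac)
      also have "\<dots> \<le> exp (real (L + 1) * ln s)"
        using floor_succ[OF x0] s1 by (simp add: x_def L_def mult_right_mono del: of_nat_add)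
      also have "\<dots> = s powr real (L + 1)" using s1 by (simp add: powr_def mult_ac)
      also have "\<dots> = t" unfolding t_def by (rule powr_realpow) (use s1 in simp)
      finally show ?thesis .
    qed
    have "E / t \<le> ((1 + c) * real n powr c) / real n powr (K * ln s)"
      by (rule frac_le[OF _ E1 _ t1]) (use c0 n2 in auto)
    also have "\<dots> = (1 + c) * real n powr (- \<gamma>)"
      by (simp add: \<gamma>_def powr_diff)
    finally show ?thesis using P1 MM by simp
  qed
  have lim: "(\<lambda>n. 1 - (1 + c) * real n powr (- \<gamma>)) \<longlonglongrightarrow> 1 - (1 + c) * 0"
    by (intro tendsto_intros tendsto_neg_powr filterlim_real_sequentially) (use \<gamma> in auto)
  show ?thesis
    unfolding T_def[symmetric]
  proof (rule tendsto_sandwich[OF _ _ _ tendsto_const])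
    show "\<forall>\<^sub>F n in sequentially. 1 - (1 + c) * real n powr (- \<gamma>) \<le> measure_pmf.prob (webgraph_model d p \<beta> n) (T n)"
      using main by (intro eventually_sequentiallyI[of 2]) auto
    show "\<forall>\<^sub>F n in sequentially. measure_pmf.prob (webgraph_model d p \<beta> n) (T n) \<le> 1"
      by simp
    show "(\<lambda>n. 1 - (1 + c) * real n powr (- \<gamma>)) \<longlonglongrightarrow> 1" using lim by simp
  qed
qed


end
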